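(* Let $f:X\to Y$ be a continuous map admitting a continuous section $s:Y\to X$ ($f\circ s=\mathrm{id}_Y$) such that for each $y\in Y$, $s(y)$ belongs to every open subset $U\subseteq X$ with $U\cap f^{-1}(y)\neq\emptyset$. Then $f\in\{M\}^{lr}$; equivalently, for every topological space $B$ and every closed subset $A\subseteq B$, the inclusion $A\hookrightarrow B$ has the left lifting property with respect to $f$. Here $M:D\to E$ is the map with $D=\{x,y,z,c\}$ having open sets $\emptyset,\{x,y,z\},D$, $E=\{u,v\}$ antidiscrete, $M(x)=M(y)=u$, $M(z)=M(c)=v$.
   Context: For continuous maps $f:A\to B$, $g:C\to D'$, $f\pitchfork g$ (left lifting property of $f$ with respect to $g$) means: for all continuous $t:A\to C$, $b:B\to D'$ with $g\circ t=b\circ f$ there is continuous $d:B\to C$ with $d\circ f=t$, $g\circ d=b$. For a class $P$, $P^l=\{f: f\pitchfork g\ \forall g\in P\}$, $P^r=\{g: f\pitchfork g\ \forall f\in P\}$, $P^{lr}=(P^l)^r$. *)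

theory Defs
  imports "HOL-Analysis.Analysis"
begin

text \<open>Maps are HOL functions; equalities of maps
  are required on the relevant topological spaces.\<close>
definition llp ::
  "'a topology \<Rightarrow> 'b topology \<Rightarrow> ('a \<Rightarrow> 'b) \<Rightarrow>
   'c topology \<Rightarrow> 'd topology \<Rightarrow> ('c \<Rightarrow> 'd) \<Rightarrow> bool" where
  "llp A B f C D g \<longleftrightarrow>
     (\<forall>t b. continuous_map A C t \<and> continuous_map B D b \<and>
            (\<forall>a\<in>topspace A. g (t a) = b (f a)) \<longrightarrow>
       (\<exists>d. continuous_map B C d \<and>
            (\<forall>a\<in>topspace A. d (f a) = t a) \<and>
            (\<forall>x\<in>topspace B. g (d x) = b x)))"

datatype Dpt = Dx | Dy | Dz | Dc

definition D_top :: "Dpt topology" where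
  "D_top = topology (\<lambda>U. U = {} \<or> U = {Dx, Dy, Dz} \<or> U = UNIV)"

datatype Ept = Eu | Ev

definition E_top :: "Ept topology" where
  "E_top = topology (\<lambda>U. U = {} \<or> U = UNIV)"

fun M_map :: "Dpt \<Rightarrow> Ept" where
  "M_map Dx = Eu" | "M_map Dy = Eu" | "M_map Dz = Ev" | "M_map Dc = Ev"

lemma istopology_D: "istopology (\<lambda>U. U = {} \<or> U = {Dx, Dy, Dz} \<or> U = (UNIV::Dpt set))"
proof -
  have un: "\<Union>K = {} \<or> \<Union>K = {Dx, Dy, Dz} \<or> \<Union>K = UNIV"
    if K: "\<forall>S\<in>K. S = {} \<or> S = {Dx, Dy, Dz} \<or> S = (UNIV::Dpt set)" for K
  proof (cases "UNIV \<in> K")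
    case True then show ?thesis by blast
  next
    case False
    show ?thesis
    proof (cases "{Dx, Dy, Dz} \<in> K")
      case True
      with False K have "\<Union>K = {Dx, Dy, Dz}" by blast
      then show ?thesis by blast
    next
      case False2: False
      with False K have "\<Union>K = {}" by blast
      then show ?thesis by blast
    qed
  qed
  show ?thesis unfolding istopology_def
    using un by (auto simp: Int_absorb2)
qed

lemma istopology_E: "istopology (\<lambda>U. U = {} \<or> U = (UNIV::Ept set))"
  unfolding istopology_def by auto

lemma continuous_M: "continuous_map D_top E_top M_map"
  unfolding continuous_map_def D_top_def E_top_def
  using istopology_D istopology_E
  by (auto simp: topspace_def)

end

theory Submission
  imports Defs
begin

lemma openin_D: "openin D_top U \<longleftrightarrow> U = {} \<or> U = {Dx, Dy, Dz} \<or> U = UNIV"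
  unfolding D_top_def using istopology_D by (simp add: topology_inverse')

lemma openin_E: "openin E_top U \<longleftrightarrow> U = {} \<or> U = UNIV"
  unfolding E_top_def using istopology_E by (simp add: topology_inverse')

lemma topspace_D: "topspace D_top = UNIV"
  unfolding topspace_def using openin_D by auto

lemma topspace_E: "topspace E_top = UNIV"
  unfolding topspace_def using openin_E by auto

lemma cont_E: "continuous_map A E_top h"
  unfolding continuous_map_def topspace_E openin_E by auto

lemma cont_D:
  assumes "openin A {a \<in> topspace A. h a \<noteq> Dc}"
  shows "continuous_map A D_top h"
proof -
  have "{a \<in> topspace A. h a \<in> {Dx, Dy, Dz}} = {a \<in> topspace A. h a \<noteq> Dc}"
    by (auto, case_tac "h x", auto)
  then show ?thesis
    unfolding continuous_map_def topspace_D openin_D using assms by auto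
qed

lemma cont_D_open:
  assumes "continuous_map B D_top h"
  shows "openin B {a \<in> topspace B. h a \<noteq> Dc}"
proof -
  have "{a \<in> topspace B. h a \<in> {Dx, Dy, Dz}} = {a \<in> topspace B. h a \<noteq> Dc}"
    by (auto, case_tac "h x", auto)
  moreover have "openin B {a \<in> topspace B. h a \<in> {Dx, Dy, Dz}}"
    using assms unfolding continuous_map_def openin_D by auto
  ultimately show ?thesis by simp
qed

lemma core:
  assumes f_cont: "continuous_map X Y f"
    and s_cont: "continuous_map Y X s"
    and sec: "\<forall>y\<in>topspace Y. f (s y) = y"
    and generic: "\<forall>y\<in>topspace Y. \<forall>U. openin X U \<and> (\<exists>x\<in>U. f x = y) \<longrightarrow> s y \<in> U"
    and g_cont: "continuous_map A B g"
    and inj: "inj_on g (topspace A)"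
    and H: "\<forall>Q. openin A Q \<longrightarrow> (\<exists>V. openin B V \<and> (\<forall>a\<in>topspace A. g a \<in> V \<longleftrightarrow> a \<in> Q)
              \<and> (\<forall>\<beta>\<in>topspace B. \<beta> \<notin> g ` topspace A \<longrightarrow> \<beta> \<in> V))"
  shows "llp A B g X Y f"
  unfolding llp_def
proof (intro allI impI)
  fix t b
  assume tb: "continuous_map A X t \<and> continuous_map B Y b \<and> (\<forall>a\<in>topspace A. f (t a) = b (g a))"
  then have t_cont: "continuous_map A X t" and b_cont: "continuous_map B Y b"
    and comm: "\<forall>a\<in>topspace A. f (t a) = b (g a)" by auto
  define d where "d \<beta> = (if \<beta> \<in> g ` topspace A then t (inv_into (topspace A) g \<beta>) else s (b \<beta>))" for \<beta>
  have dg: "d (g a) = t a" if "a \<in> topspace A" for a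
    using that inj by (simp add: d_def)
  have d_cont: "continuous_map B X d"
    unfolding continuous_map_def
  proof (intro conjI allI impI)
    show "d \<in> topspace B \<rightarrow> topspace X"
    proof
      fix \<beta> assume "\<beta> \<in> topspace B"
      then show "d \<beta> \<in> topspace X"
        using t_cont b_cont s_cont inj
        by (auto simp: d_def continuous_map_def Pi_iff)
    qed
  next
    fix U assume U: "openin X U"
    define Q where "Q = {a \<in> topspace A. t a \<in> U}"
    have "openin A Q" unfolding Q_def using t_cont U by (simp add: continuous_map_def)
    then obtain V where V: "openin B V" "\<forall>a\<in>topspace A. g a \<in> V \<longleftrightarrow> a \<in> Q"
      "\<forall>\<beta>\<in>topspace B. \<beta> \<notin> g ` topspace A \<longrightarrow> \<beta> \<in> V" using H by blast
    define W where "W = {\<beta> \<in> topspace B. s (b \<beta>) \<in> U}"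
    have sb: "continuous_map B X (s \<circ> b)" using s_cont b_cont continuous_map_compose by blast
    have W: "openin B W" unfolding W_def using sb U by (simp add: continuous_map_def)
    have "{\<beta> \<in> topspace B. d \<beta> \<in> U} = W \<inter> V"
    proof (rule set_eqI, rule iffI)
      fix \<beta> assume "\<beta> \<in> {\<beta> \<in> topspace B. d \<beta> \<in> U}"
      then have bB: "\<beta> \<in> topspace B" and dU: "d \<beta> \<in> U" by auto
      show "\<beta> \<in> W \<inter> V"
      proof (cases "\<beta> \<in> g ` topspace A")
        case True
        then obtain a where a: "a \<in> topspace A" "\<beta> = g a" by auto
        then have taU: "t a \<in> U" using dU dg by simp
        have "b \<beta> \<in> topspace Y" using b_cont bB by (auto simp: continuous_map_def)
        moreover have "f (t a) = b \<beta>" using comm a by simp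
        ultimately have "s (b \<beta>) \<in> U" using generic U taU by blast
        moreover have "\<beta> \<in> V" using V(2) a taU Q_def by auto
        ultimately show ?thesis using bB W_def by auto
      next
        case False
        then show ?thesis using dU bB V(3) by (auto simp: W_def d_def)
      qed
    next
      fix \<beta> assume "\<beta> \<in> W \<inter> V"
      then have bB: "\<beta> \<in> topspace B" and sU: "s (b \<beta>) \<in> U" and bV: "\<beta> \<in> V"
        by (auto simp: W_def)
      show "\<beta> \<in> {\<beta> \<in> topspace B. d \<beta> \<in> U}"
      proof (cases "\<beta> \<in> g ` topspace A")
        case True
        then obtain a where a: "a \<in> topspace A" "\<beta> = g a" by auto
        then have "a \<in> Q" using V(2) bV by auto
        then show ?thesis using a dg bB Q_def by auto
      next
        case False
        then show ?thesis using sU bB by (auto simp: d_def)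
      qed
    qed
    then show "openin B {\<beta> \<in> topspace B. d \<beta> \<in> U}" using W V(1) by auto
  qed
  have "\<forall>x\<in>topspace B. f (d x) = b x"
  proof
    fix x assume xB: "x \<in> topspace B"
    show "f (d x) = b x"
    proof (cases "x \<in> g ` topspace A")
      case True
      then obtain a where a: "a \<in> topspace A" "x = g a" by auto
      then show ?thesis using dg comm by simp
    next
      case False
      have "b x \<in> topspace Y" using b_cont xB by (auto simp: continuous_map_def)
      then show ?thesis using False sec by (simp add: d_def)
    qed
  qed
  then show "\<exists>d. continuous_map B X d \<and> (\<forall>a\<in>topspace A. d (g a) = t a) \<and> (\<forall>x\<in>topspace B. f (d x) = b x)"
    using d_cont dg by blast
qed

lemma from_M:
  assumes g_cont: "continuous_map A B g" and L: "llp A B g D_top E_top M_map"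
  shows "inj_on g (topspace A)"
    and "\<forall>Q. openin A Q \<longrightarrow> (\<exists>V. openin B V \<and> (\<forall>a\<in>topspace A. g a \<in> V \<longleftrightarrow> a \<in> Q)
              \<and> (\<forall>\<beta>\<in>topspace B. \<beta> \<notin> g ` topspace A \<longrightarrow> \<beta> \<in> V))"
proof -
  show "inj_on g (topspace A)"
  proof (rule inj_onI, rule ccontr)
    fix a1 a2 assume a: "a1 \<in> topspace A" "a2 \<in> topspace A" "g a1 = g a2" "a1 \<noteq> a2"
    define t' where "t' a = (if a = a1 then Dx else Dy)" for a
    have "{a \<in> topspace A. t' a \<noteq> Dc} = topspace A" by (auto simp: t'_def)
    then have "continuous_map A D_top t'"
      by (intro cont_D) simp
    moreover have "\<forall>a\<in>topspace A. M_map (t' a) = (\<lambda>_. Eu) (g a)" by (simp add: t'_def)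
    moreover have "continuous_map B E_top (\<lambda>_. Eu)" by (rule cont_E)
    ultimately obtain d where d: "\<forall>a\<in>topspace A. d (g a) = t' a"
      using L unfolding llp_def by (metis (no_types, lifting))
    then have "t' a1 = t' a2" using a by metis
    then show False using a by (simp add: t'_def)
  qed
next
  show "\<forall>Q. openin A Q \<longrightarrow> (\<exists>V. openin B V \<and> (\<forall>a\<in>topspace A. g a \<in> V \<longleftrightarrow> a \<in> Q)
              \<and> (\<forall>\<beta>\<in>topspace B. \<beta> \<notin> g ` topspace A \<longrightarrow> \<beta> \<in> V))"
  proof (intro allI impI)
    fix Q assume Q: "openin A Q"
    define t' where "t' a = (if a \<in> Q then Dz else Dc)" for a
    define b' where "b' \<beta> = (if \<beta> \<in> g ` topspace A then Ev else Eu)" for \<beta>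
    have "{a \<in> topspace A. t' a \<noteq> Dc} = Q" using Q openin_subset by (auto simp: t'_def)
    then have "continuous_map A D_top t'" using Q by (intro cont_D) simp
    moreover have "\<forall>a\<in>topspace A. M_map (t' a) = b' (g a)" by (simp add: t'_def b'_def)
    moreover have "continuous_map B E_top b'" by (rule cont_E)
    ultimately obtain d where d: "continuous_map B D_top d" "\<forall>a\<in>topspace A. d (g a) = t' a"
      "\<forall>x\<in>topspace B. M_map (d x) = b' x"
      using L unfolding llp_def by (metis (no_types, lifting))
    define V where "V = {x \<in> topspace B. d x \<noteq> Dc}"
    have "openin B V" unfolding V_def using cont_D_open d(1) .
    moreover have "\<forall>a\<in>topspace A. g a \<in> V \<longleftrightarrow> a \<in> Q"
    proof
      fix a assume a: "a \<in> topspace A"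
      then have "g a \<in> topspace B" using g_cont by (simp add: continuous_map_def Pi_iff)
      then show "g a \<in> V \<longleftrightarrow> a \<in> Q" using d(2) a by (simp add: V_def t'_def)
    qed
    moreover have "\<forall>\<beta>\<in>topspace B. \<beta> \<notin> g ` topspace A \<longrightarrow> \<beta> \<in> V"
    proof (intro ballI impI)
      fix \<beta> assume "\<beta> \<in> topspace B" "\<beta> \<notin> g ` topspace A"
      then have "M_map (d \<beta>) = Eu" using d(3) by (simp add: b'_def)
      then show "\<beta> \<in> V" using \<open>\<beta> \<in> topspace B\<close> by (auto simp: V_def)
    qed
    ultimately show "\<exists>V. openin B V \<and> (\<forall>a\<in>topspace A. g a \<in> V \<longleftrightarrow> a \<in> Q)
              \<and> (\<forall>\<beta>\<in>topspace B. \<beta> \<notin> g ` topspace A \<longrightarrow> \<beta> \<in> V)" by blast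
  qed
qed

theorem mainTheorem7:
  fixes X :: "'a topology" and Y :: "'b topology"
    and f :: "'a \<Rightarrow> 'b" and s :: "'b \<Rightarrow> 'a"
  assumes f_cont: "continuous_map X Y f"
    and s_cont: "continuous_map Y X s"
    and sec: "\<forall>y\<in>topspace Y. f (s y) = y"
    and generic: "\<forall>y\<in>topspace Y. \<forall>U. openin X U \<and> (\<exists>x\<in>U. f x = y) \<longrightarrow> s y \<in> U"
  shows "(\<forall>(A :: 'c topology) (B :: 'd topology) g.
            continuous_map A B g \<and> llp A B g D_top E_top M_map \<longrightarrow> llp A B g X Y f)
       \<and> (\<forall>(B :: 'e topology) S. closedin B S \<longrightarrow> llp (subtopology B S) B id X Y f)"
proof (intro conjI allI impI)
  fix A :: "'c topology" and B :: "'d topology" and g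
  assume H: "continuous_map A B g \<and> llp A B g D_top E_top M_map"
  then have g: "continuous_map A B g" and L: "llp A B g D_top E_top M_map" by auto
  show "llp A B g X Y f"
    by (rule core[OF assms g from_M(1)[OF g L] from_M(2)[OF g L]])
next
  fix B :: "'e topology" and S
  assume S: "closedin B S"
  show "llp (subtopology B S) B id X Y f"
  proof (rule core[OF assms])
    show "continuous_map (subtopology B S) B id" by simp
    show "inj_on id (topspace (subtopology B S))" by simp
    show "\<forall>Q. openin (subtopology B S) Q \<longrightarrow> (\<exists>V. openin B V \<and> (\<forall>a\<in>topspace (subtopology B S). id a \<in> V \<longleftrightarrow> a \<in> Q)
              \<and> (\<forall>\<beta>\<in>topspace B. \<beta> \<notin> id ` topspace (subtopology B S) \<longrightarrow> \<beta> \<in> V))"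
    proof (intro allI impI)
      fix Q assume "openin (subtopology B S) Q"
      then obtain T where T: "openin B T" "Q = T \<inter> S" by (auto simp: openin_subtopology)
      have "openin B (T \<union> (topspace B - S))" using T S by (intro openin_Un openin_diff) auto
      moreover have "\<forall>a\<in>topspace (subtopology B S). id a \<in> T \<union> (topspace B - S) \<longleftrightarrow> a \<in> Q"
        using T by auto
      moreover have "\<forall>\<beta>\<in>topspace B. \<beta> \<notin> id ` topspace (subtopology B S) \<longrightarrow> \<beta> \<in> T \<union> (topspace B - S)"
        by auto
      ultimately show "\<exists>V. openin B V \<and> (\<forall>a\<in>topspace (subtopology B S). id a \<in> V \<longleftrightarrow> a \<in> Q)
              \<and> (\<forall>\<beta>\<in>topspace B. \<beta> \<notin> id ` topspace (subtopology B S) \<longrightarrow> \<beta> \<in> V)" by blast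
    qed
  qed
qed

end
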